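(* Let $N(T)$ be a $C^0$ net on a grid $T$ having the BMSDD property with constant $L$. Then the piecewise Coons patch $\mathcal{C}(N):\mathbb{R}^2\to\mathbb{R}^m$ has the BMSDD property with constant $3L$ in $\mathbb{R}^2$.
   Context: For strictly increasing bi-infinite real sequences $(s_i)$, $(t_j)$, unbounded above and below, the grid is $T=\bigcup_i\{s_i\}\times\mathbb{R}\cup\bigcup_j\mathbb{R}\times\{t_j\}$. A net $N(T)$ is a function on $T$ with values in $\mathbb{R}^m$; it is $C^0$ if all u-functions $s\mapsto N(s,t_j)$, $t\mapsto N(s_i,t)$ are continuous. The piecewise Coons patch is defined on each rectangle $[s_i,s_{i+1}]\times[t_j,t_{j+1}]$, with $h_1=s_{i+1}-s_i$, $h_2=t_{j+1}-t_j$, by $\mathcal{C}(N)(s,t)=\frac{s_{i+1}-s}{h_1}N(s_i,t)+\frac{s-s_i}{h_1}N(s_{i+1},t)+\frac{t_{j+1}-t}{h_2}N(s,t_j)+\frac{t-t_j}{h_2}N(s,t_{j+1})-B(s,t)$, with $B(s,t)=\frac{s_{i+1}-s}{h_1}\big(\frac{t_{j+1}-t}{h_2}N(s_i,t_j)+\frac{t-t_j}{h_2}N(s_i,t_{j+1})\big)+\frac{s-s_i}{h_1}\big(\frac{t_{j+1}-t}{h_2}N(s_{i+1},t_j)+\frac{t-t_j}{h_2}N(s_{i+1},t_{j+1})\big)$. For $\sigma_1\ne\sigma_2$, $\tau_1\ne\tau_2$, $[\sigma_1,\sigma_2;\tau_1,\tau_2]G=\frac{G(\sigma_1,\tau_1)+G(\sigma_2,\tau_2)-G(\sigma_2,\tau_1)-G(\sigma_1,\tau_2)}{(\sigma_1-\sigma_2)(\tau_1-\tau_2)}$.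 A net $N(T)$ has the BMSDD property with constant $L$ if $\|[\sigma_1,\sigma_2;\tau_1,\tau_2]N\|_\infty\le L$ whenever all four points $(\sigma_i,\tau_j)$ lie in $T$; a function $G$ on $\mathbb{R}^2$ has the BMSDD property with constant $L$ in $\mathbb{R}^2$ if this bound holds for all $\sigma_1\ne\sigma_2$, $\tau_1\ne\tau_2$. *)

theory Defs
  imports "HOL-Analysis.Analysis"
begin

definition knot_seq :: "(int \<Rightarrow> real) \<Rightarrow> bool" where
  "knot_seq s \<longleftrightarrow> strict_mono s \<and> (\<forall>x. \<exists>i. x < s i) \<and> (\<forall>x. \<exists>i. s i < x)"

definition grid :: "(int \<Rightarrow> real) \<Rightarrow> (int \<Rightarrow> real) \<Rightarrow> (real \<times> real) set" where
  "grid s t = {(x, y). (\<exists>i. x = s i) \<or> (\<exists>j. y = t j)}"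

text \<open>A net is represented by a function on R^2 of which only the values on the grid matter.
  It is C^0 if all u-functions are continuous.\<close>
definition C0_net :: "(int \<Rightarrow> real) \<Rightarrow> (int \<Rightarrow> real) \<Rightarrow> (real \<Rightarrow> real \<Rightarrow> 'a::topological_space) \<Rightarrow> bool" where
  "C0_net s t N \<longleftrightarrow> (\<forall>j. continuous_on UNIV (\<lambda>x. N x (t j))) \<and> (\<forall>i. continuous_on UNIV (\<lambda>y. N (s i) y))"

definition knot_idx :: "(int \<Rightarrow> real) \<Rightarrow> real \<Rightarrow> int" where
  "knot_idx s x = (THE i. s i \<le> x \<and> x < s (i + 1))"

text \<open>Piecewise Coons patch (on the closed rectangles the formula agrees on shared edges,
  so using half-open cells is no restriction).\<close>
definition coons :: "(int \<Rightarrow> real) \<Rightarrow> (int \<Rightarrow> real) \<Rightarrow> (real \<Rightarrow> real \<Rightarrow> 'a::real_vector) \<Rightarrow> real \<Rightarrow> real \<Rightarrow> 'a" where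
  "coons s t N x y =
    (let i = knot_idx s x; j = knot_idx t y;
         h1 = s (i+1) - s i; h2 = t (j+1) - t j;
         a0 = (s (i+1) - x) / h1; a1 = (x - s i) / h1;
         b0 = (t (j+1) - y) / h2; b1 = (y - t j) / h2;
         B = a0 *\<^sub>R (b0 *\<^sub>R N (s i) (t j) + b1 *\<^sub>R N (s i) (t (j+1)))
           + a1 *\<^sub>R (b0 *\<^sub>R N (s (i+1)) (t j) + b1 *\<^sub>R N (s (i+1)) (t (j+1)))
     in a0 *\<^sub>R N (s i) y + a1 *\<^sub>R N (s (i+1)) y + b0 *\<^sub>R N x (t j) + b1 *\<^sub>R N x (t (j+1)) - B)"

definition mdd :: "(real \<Rightarrow> real \<Rightarrow> 'a::real_vector) \<Rightarrow> real \<Rightarrow> real \<Rightarrow> real \<Rightarrow> real \<Rightarrow> 'a" where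
  "mdd G \<sigma>1 \<sigma>2 \<tau>1 \<tau>2 =
     (1 / ((\<sigma>1 - \<sigma>2) * (\<tau>1 - \<tau>2))) *\<^sub>R (G \<sigma>1 \<tau>1 + G \<sigma>2 \<tau>2 - G \<sigma>2 \<tau>1 - G \<sigma>1 \<tau>2)"

definition BMSDD_net :: "(int \<Rightarrow> real) \<Rightarrow> (int \<Rightarrow> real) \<Rightarrow> (real \<Rightarrow> real \<Rightarrow> real ^ 'm) \<Rightarrow> real \<Rightarrow> bool" where
  "BMSDD_net s t N L \<longleftrightarrow>
     (\<forall>\<sigma>1 \<sigma>2 \<tau>1 \<tau>2. \<sigma>1 \<noteq> \<sigma>2 \<and> \<tau>1 \<noteq> \<tau>2 \<and>
        (\<sigma>1, \<tau>1) \<in> grid s t \<and> (\<sigma>1, \<tau>2) \<in> grid s t \<and> (\<sigma>2, \<tau>1) \<in> grid s t \<and> (\<sigma>2, \<tau>2) \<in> grid s t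
        \<longrightarrow> infnorm (mdd N \<sigma>1 \<sigma>2 \<tau>1 \<tau>2) \<le> L)"

definition BMSDD_R2 :: "(real \<Rightarrow> real \<Rightarrow> real ^ 'm) \<Rightarrow> real \<Rightarrow> bool" where
  "BMSDD_R2 G L \<longleftrightarrow>
     (\<forall>\<sigma>1 \<sigma>2 \<tau>1 \<tau>2. \<sigma>1 \<noteq> \<sigma>2 \<and> \<tau>1 \<noteq> \<tau>2 \<longrightarrow> infnorm (mdd G \<sigma>1 \<sigma>2 \<tau>1 \<tau>2) \<le> L)"

end

theory Submission
  imports Defs
begin

lemma ks_mono: "knot_seq s \<Longrightarrow> i \<le> k \<Longrightarrow> s i \<le> s k"
  unfolding knot_seq_def by (meson strict_mono_less_eq)

lemma ks_less: "knot_seq s \<Longrightarrow> i < k \<Longrightarrow> s i < s k"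
  unfolding knot_seq_def by (meson strict_monoD)

lemma ks_uniq:
  assumes "knot_seq s" "s i \<le> x" "x < s (i+1)" "s k \<le> x" "x < s (k+1)"
  shows "i = k"
proof (rule ccontr)
  assume "i \<noteq> k"
  then have "i + 1 \<le> k \<or> k + 1 \<le> i" by auto
  then show False using ks_mono[OF assms(1)] assms by (meson not_le order_trans)
qed

lemma ks_exists:
  assumes "knot_seq s"
  shows "\<exists>i. s i \<le> x \<and> x < s (i+1)"
proof -
  obtain k where k: "x < s k" using assms unfolding knot_seq_def by blast
  obtain m where m: "s m < x" using assms unfolding knot_seq_def by blast
  have mk: "m < k" using k m ks_mono[OF assms, of k m] by force
  define P where "P n \<longleftrightarrow> x < s (m + int n)" for n
  have "P (nat (k - m))" using k mk unfolding P_def by simp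
  then have PL: "P (LEAST n. P n)" by (rule LeastI)
  have "(LEAST n. P n) \<noteq> 0"
  proof
    assume "(LEAST n. P n) = 0"
    then show False using PL m unfolding P_def by auto
  qed
  then obtain p where p: "(LEAST n. P n) = Suc p" using not0_implies_Suc by blast
  have "\<not> P p" using p not_less_Least[of p P] by simp
  then show ?thesis using PL p unfolding P_def
    by (intro exI[of _ "m + int p"]) (auto simp: ac_simps)
qed

lemma knot_idx:
  assumes "knot_seq s"
  shows "s (knot_idx s x) \<le> x \<and> x < s (knot_idx s x + 1)"
proof -
  obtain i where i: "s i \<le> x \<and> x < s (i+1)" using ks_exists[OF assms] by blast
  have "\<exists>!i. s i \<le> x \<and> x < s (i+1)"
    using i ks_uniq[OF assms] by blast
  then show ?thesis unfolding knot_idx_def by (rule theI')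
qed

lemma knot_idx_eq:
  assumes "knot_seq s" "s i \<le> x" "x < s (i+1)"
  shows "knot_idx s x = i"
  using knot_idx[OF assms(1), of x] ks_uniq[OF assms] by metis

lemma knot_idx_mono:
  assumes "knot_seq s" "a \<le> b"
  shows "knot_idx s a \<le> knot_idx s b"
proof (rule ccontr)
  assume "\<not> ?thesis"
  then have "knot_idx s b + 1 \<le> knot_idx s a" by simp
  then have "s (knot_idx s b + 1) \<le> s (knot_idx s a)" by (rule ks_mono[OF assms(1)])
  then show False using knot_idx[OF assms(1), of a] knot_idx[OF assms(1), of b] assms(2) by linarith
qed

lemma oneD:
  fixes g :: "real \<Rightarrow> real \<Rightarrow> real ^ 'm"
  assumes ks: "knot_seq s"
    and add: "\<And>a b c. g a c = g a b + g b c"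
    and cell: "\<And>i a b. s i \<le> a \<Longrightarrow> a < b \<Longrightarrow> b \<le> s (i+1) \<Longrightarrow> infnorm (g a b) \<le> M * (b - a)"
  shows "a < b \<Longrightarrow> infnorm (g a b) \<le> M * (b - a)"
proof (induction "nat (knot_idx s b - knot_idx s a)" arbitrary: a rule: less_induct)
  case less
  define i where "i = knot_idx s a"
  have ia: "s i \<le> a" "a < s (i+1)" using knot_idx[OF ks, of a] unfolding i_def by auto
  show ?case
  proof (cases "b \<le> s (i+1)")
    case True
    then show ?thesis using cell ia less.prems by blast
  next
    case False
    let ?c = "s (i+1)"
    have c1: "infnorm (g a ?c) \<le> M * (?c - a)" using cell ia by blast
    have ic: "knot_idx s ?c = i + 1" using knot_idx_eq[OF ks, of "i+1" ?c] ks_less[OF ks, of "i+1" "i+2"]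
      by (simp add: add.assoc)
    have "knot_idx s ?c \<le> knot_idx s b" using False by (intro knot_idx_mono[OF ks]) simp
    then have "nat (knot_idx s b - knot_idx s ?c) < nat (knot_idx s b - knot_idx s a)"
      using ic i_def by simp
    then have c2: "infnorm (g ?c b) \<le> M * (b - ?c)" using less.hyps False by simp
    have "infnorm (g a b) \<le> infnorm (g a ?c) + infnorm (g ?c b)"
      using add[of a b ?c] infnorm_triangle by metis
    also have "\<dots> \<le> M * (b - a)" using c1 c2 by (simp add: algebra_simps)
    finally show ?thesis .
  qed
qed


definition cF :: "(int \<Rightarrow> real) \<Rightarrow> (int \<Rightarrow> real) \<Rightarrow> (real \<Rightarrow> real \<Rightarrow> 'a::real_vector) \<Rightarrow> int \<Rightarrow> int \<Rightarrow> real \<Rightarrow> real \<Rightarrow> 'a" where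
  "cF s t N i j x y =
    (let h1 = s (i+1) - s i; h2 = t (j+1) - t j;
         a0 = (s (i+1) - x) / h1; a1 = (x - s i) / h1;
         b0 = (t (j+1) - y) / h2; b1 = (y - t j) / h2;
         B = a0 *\<^sub>R (b0 *\<^sub>R N (s i) (t j) + b1 *\<^sub>R N (s i) (t (j+1)))
           + a1 *\<^sub>R (b0 *\<^sub>R N (s (i+1)) (t j) + b1 *\<^sub>R N (s (i+1)) (t (j+1)))
     in a0 *\<^sub>R N (s i) y + a1 *\<^sub>R N (s (i+1)) y + b0 *\<^sub>R N x (t j) + b1 *\<^sub>R N x (t (j+1)) - B)"

lemma coons_cF: "coons s t N x y = cF s t N (knot_idx s x) (knot_idx t y) x y"
  unfolding coons_def cF_def Let_def by simp

lemma cF_x0: "s i < s (i+1) \<Longrightarrow> cF s t N i j (s i) y = N (s i) y"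
  unfolding cF_def Let_def by (simp add: scaleR_add_right)
lemma cF_x1: "s i < s (i+1) \<Longrightarrow> cF s t N i j (s (i+1)) y = N (s (i+1)) y"
  unfolding cF_def Let_def by (simp add: scaleR_add_right)
lemma cF_y0: "t j < t (j+1) \<Longrightarrow> cF s t N i j x (t j) = N x (t j)"
  unfolding cF_def Let_def by (simp add: scaleR_add_right algebra_simps)
lemma cF_y1: "t j < t (j+1) \<Longrightarrow> cF s t N i j x (t (j+1)) = N x (t (j+1))"
  unfolding cF_def Let_def by (simp add: scaleR_add_right algebra_simps)

definition dd :: "(real \<Rightarrow> real \<Rightarrow> 'a::real_vector) \<Rightarrow> real \<Rightarrow> real \<Rightarrow> real \<Rightarrow> real \<Rightarrow> 'a" where
  "dd G a b c d = G a c + G b d - G b c - G a d"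

lemma cF_dd_real:
  fixes N :: "real \<Rightarrow> real \<Rightarrow> real"
  assumes "s i < s (i+1)" "t j < t (j+1)"
  shows "dd (cF s t N i j) a b c d =
    ((a-b)/(s (i+1) - s i)) * dd N (s (i+1)) (s i) c d
    + ((c-d)/(t (j+1) - t j)) * dd N a b (t (j+1)) (t j)
    - ((a-b)*(c-d)/((s (i+1) - s i)*(t (j+1) - t j))) * dd N (s (i+1)) (s i) (t (j+1)) (t j)"
proof -
  define h1 where "h1 = s (i+1) - s i"
  define h2 where "h2 = t (j+1) - t j"
  have h: "h1 \<noteq> 0" "h2 \<noteq> 0" using assms h1_def h2_def by auto
  have e1: "s (i+1) = s i + h1" "t (j+1) = t j + h2" using h1_def h2_def by auto
  show ?thesis unfolding dd_def cF_def Let_def e1 using h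
    by (simp add: field_simps)
qed

lemma cF_comp: "cF s t N i j x y $ k = cF s t (\<lambda>x y. N x y $ k) i j x y"
  unfolding cF_def Let_def by simp

lemma dd_comp: "dd G a b c d $ k = dd (\<lambda>x y. G x y $ k) a b c d"
  unfolding dd_def by simp

lemma cF_dd:
  fixes N :: "real \<Rightarrow> real \<Rightarrow> real ^ 'm"
  assumes "s i < s (i+1)" "t j < t (j+1)"
  shows "dd (cF s t N i j) a b c d =
    ((a-b)/(s (i+1) - s i)) *\<^sub>R dd N (s (i+1)) (s i) c d
    + ((c-d)/(t (j+1) - t j)) *\<^sub>R dd N a b (t (j+1)) (t j)
    - ((a-b)*(c-d)/((s (i+1) - s i)*(t (j+1) - t j))) *\<^sub>R dd N (s (i+1)) (s i) (t (j+1)) (t j)"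
  unfolding vec_eq_iff
  using cF_dd_real[OF assms] by (simp add: dd_comp cF_comp)


lemma infnorm_tri3:
  fixes x y z :: "real ^ 'm"
  shows "infnorm (x + y - z) \<le> infnorm x + infnorm y + infnorm z"
proof -
  have "infnorm (x + y - z) \<le> infnorm (x + y) + infnorm (- z)"
    using infnorm_triangle[of "x+y" "-z"] by simp
  then show ?thesis using infnorm_triangle[of x y] infnorm_neg[of z] by linarith
qed

lemma coons_cell:
  assumes ks: "knot_seq s" and kt: "knot_seq t"
    and x: "s i \<le> x" "x \<le> s (i+1)" and y: "t j \<le> y" "y \<le> t (j+1)"
  shows "coons s t N x y = cF s t N i j x y"
proof -
  have si: "s i < s (i+1)" using ks_less[OF ks] by simp
  have si1: "s (i+1) < s (i+1+1)" using ks_less[OF ks] by simp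
  have tj: "t j < t (j+1)" using ks_less[OF kt] by simp
  have tj1: "t (j+1) < t (j+1+1)" using ks_less[OF kt] by simp
  show ?thesis
  proof (cases "x = s (i+1)")
    case True
    have "knot_idx s x = i + 1" using True knot_idx_eq[OF ks, of "i+1" x] si1 by simp
    then have "coons s t N x y = N x y" using True coons_cF[of s t N x y] cF_x0[of s "i+1" t N "knot_idx t y" y] si1 by simp
    then show ?thesis using True cF_x1[OF si, of t N j y] by metis
  next
    case F1: False
    show ?thesis
    proof (cases "y = t (j+1)")
      case True
      have "knot_idx t y = j + 1" using True knot_idx_eq[OF kt, of "j+1" y] tj1 by simp
      then have "coons s t N x y = N x y" using True coons_cF[of s t N x y] cF_y0[of t "j+1" s N "knot_idx s x" x] tj1 by simp
      then show ?thesis using True cF_y1[OF tj, of s N i x] by metis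
    next
      case False
      have "knot_idx s x = i" using F1 x knot_idx_eq[OF ks] by simp
      moreover have "knot_idx t y = j" using False y knot_idx_eq[OF kt] by simp
      ultimately show ?thesis using coons_cF by metis
    qed
  qed
qed

lemma net_dd:
  assumes "BMSDD_net s t N L" "a \<noteq> b" "c \<noteq> d"
    "(a, c) \<in> grid s t" "(a, d) \<in> grid s t" "(b, c) \<in> grid s t" "(b, d) \<in> grid s t"
  shows "infnorm (dd N a b c d) \<le> L * \<bar>a - b\<bar> * \<bar>c - d\<bar>"
proof -
  have "infnorm (mdd N a b c d) \<le> L" using assms unfolding BMSDD_net_def by blast
  moreover have "mdd N a b c d = (1 / ((a-b)*(c-d))) *\<^sub>R dd N a b c d"
    unfolding mdd_def dd_def by simp
  ultimately have "\<bar>1 / ((a-b)*(c-d))\<bar> * infnorm (dd N a b c d) \<le> L"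
    by (simp only: infnorm_mul)
  moreover have "\<bar>1 / ((a-b)*(c-d))\<bar> = 1 / (\<bar>a - b\<bar> * \<bar>c - d\<bar>)" by (simp add: abs_mult)
  moreover have "\<bar>a - b\<bar> * \<bar>c - d\<bar> > 0" using assms by simp
  ultimately have "infnorm (dd N a b c d) / (\<bar>a - b\<bar> * \<bar>c - d\<bar>) \<le> L" by simp
  then show ?thesis using \<open>\<bar>a - b\<bar> * \<bar>c - d\<bar> > 0\<close> by (simp add: divide_le_eq ac_simps)
qed

lemma cell_bound:
  fixes N :: "real \<Rightarrow> real \<Rightarrow> real ^ 'm"
  assumes ks: "knot_seq s" and kt: "knot_seq t" and net: "BMSDD_net s t N L"
    and a: "s i \<le> a" "a < b" "b \<le> s (i+1)" and c: "t j \<le> c" "c < d" "d \<le> t (j+1)"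
  shows "infnorm (dd (coons s t N) a b c d) \<le> 3 * L * (b - a) * (d - c)"
proof -
  have si: "s i < s (i+1)" using ks_less[OF ks] by simp
  have tj: "t j < t (j+1)" using ks_less[OF kt] by simp
  have "dd (coons s t N) a b c d = dd (cF s t N i j) a b c d"
    unfolding dd_def using coons_cell[OF ks kt, of i _ j _ N] a c by simp
  also have "\<dots> = ((a-b)/(s (i+1) - s i)) *\<^sub>R dd N (s (i+1)) (s i) c d
    + ((c-d)/(t (j+1) - t j)) *\<^sub>R dd N a b (t (j+1)) (t j)
    - ((a-b)*(c-d)/((s (i+1) - s i)*(t (j+1) - t j))) *\<^sub>R dd N (s (i+1)) (s i) (t (j+1)) (t j)"
    by (rule cF_dd[OF si tj])
  finally have eq: "dd (coons s t N) a b c d = \<dots>" .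
  have g: "(x, y) \<in> grid s t" if "(\<exists>i. x = s i) \<or> (\<exists>j. y = t j)" for x y
    using that unfolding grid_def by simp
  have n1: "infnorm (dd N (s (i+1)) (s i) c d) \<le> L * \<bar>s (i+1) - s i\<bar> * \<bar>c - d\<bar>"
    using si c by (intro net_dd[OF net]) (auto intro!: g)
  have n2: "infnorm (dd N a b (t (j+1)) (t j)) \<le> L * \<bar>a - b\<bar> * \<bar>t (j+1) - t j\<bar>"
    using tj a by (intro net_dd[OF net]) (auto intro!: g)
  have n3: "infnorm (dd N (s (i+1)) (s i) (t (j+1)) (t j)) \<le> L * \<bar>s (i+1) - s i\<bar> * \<bar>t (j+1) - t j\<bar>"
    using tj si by (intro net_dd[OF net]) (auto intro!: g)
  define h1 where "h1 = s (i+1) - s i"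
  define h2 where "h2 = t (j+1) - t j"
  have h1p: "h1 > 0" and h2p: "h2 > 0" using si tj h1_def h2_def by auto
  have t1: "infnorm (((a-b)/h1) *\<^sub>R dd N (s (i+1)) (s i) c d) \<le> L * (b - a) * (d - c)"
  proof -
    have "infnorm (((a-b)/h1) *\<^sub>R dd N (s (i+1)) (s i) c d) = ((b-a)/h1) * infnorm (dd N (s (i+1)) (s i) c d)"
      using a h1p by (simp add: infnorm_mul abs_div abs_minus_commute)
    also have "\<dots> \<le> ((b-a)/h1) * (L * h1 * (d - c))"
      using n1 h1p a c unfolding h1_def[symmetric] by (intro mult_left_mono) auto
    also have "\<dots> = L * (b - a) * (d - c)" using h1p by (simp add: field_simps)
    finally show ?thesis .
  qed
  have t2: "infnorm (((c-d)/h2) *\<^sub>R dd N a b (t (j+1)) (t j)) \<le> L * (b - a) * (d - c)"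
  proof -
    have "infnorm (((c-d)/h2) *\<^sub>R dd N a b (t (j+1)) (t j)) = ((d-c)/h2) * infnorm (dd N a b (t (j+1)) (t j))"
      using c h2p by (simp add: infnorm_mul abs_div abs_minus_commute)
    also have "\<dots> \<le> ((d-c)/h2) * (L * (b - a) * h2)"
      using n2 h2p a c unfolding h2_def[symmetric] by (intro mult_left_mono) auto
    also have "\<dots> = L * (b - a) * (d - c)" using h2p by (simp add: field_simps)
    finally show ?thesis .
  qed
  have t3: "infnorm (((a-b)*(c-d)/(h1*h2)) *\<^sub>R dd N (s (i+1)) (s i) (t (j+1)) (t j)) \<le> L * (b - a) * (d - c)"
  proof -
    have "infnorm (((a-b)*(c-d)/(h1*h2)) *\<^sub>R dd N (s (i+1)) (s i) (t (j+1)) (t j))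
        = ((b-a)*(d-c)/(h1*h2)) * infnorm (dd N (s (i+1)) (s i) (t (j+1)) (t j))"
      using a c h1p h2p by (simp add: infnorm_mul abs_div abs_mult abs_minus_commute)
    also have "\<dots> \<le> ((b-a)*(d-c)/(h1*h2)) * (L * h1 * h2)"
      using n3 h1p h2p a c unfolding h1_def[symmetric] h2_def[symmetric] by (intro mult_left_mono) auto
    also have "\<dots> = L * (b - a) * (d - c)" using h1p h2p by (simp add: field_simps)
    finally show ?thesis .
  qed
  show ?thesis unfolding eq h1_def[symmetric] h2_def[symmetric]
    using infnorm_tri3[of "((a-b)/h1) *\<^sub>R dd N (s (i+1)) (s i) c d"
      "((c-d)/h2) *\<^sub>R dd N a b (t (j+1)) (t j)"
      "((a-b)*(c-d)/(h1*h2)) *\<^sub>R dd N (s (i+1)) (s i) (t (j+1)) (t j)"] t1 t2 t3 by linarith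
qed


lemma dd_addx: "dd G a c u v = dd G a b u v + dd G b c u v"
  unfolding dd_def by (simp add: algebra_simps)
lemma dd_addy: "dd G a b u w = dd G a b u v + dd G a b v w"
  unfolding dd_def by (simp add: algebra_simps)
lemma dd_swapx: "dd G b a u v = - dd G a b u v"
  unfolding dd_def by (simp add: algebra_simps)
lemma dd_swapy: "dd G a b v u = - dd G a b u v"
  unfolding dd_def by (simp add: algebra_simps)

theorem theorem3:
  fixes s t :: "int \<Rightarrow> real" and N :: "real \<Rightarrow> real \<Rightarrow> real ^ 'm" and L :: real
  assumes "knot_seq s" and "knot_seq t"
    and "C0_net s t N"
    and "BMSDD_net s t N L"
  shows "BMSDD_R2 (coons s t N) (3 * L)"
proof -
  note ks = assms(1) and kt = assms(2) and net = assms(4)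
  let ?C = "coons s t N"
  have step1: "infnorm (dd ?C a b c d) \<le> 3 * L * (d - c) * (b - a)"
    if "t j \<le> c" "c < d" "d \<le> t (j+1)" "a < b" for a b c d j
  proof -
    have "infnorm (dd ?C a b c d) \<le> (3 * L * (d - c)) * (b - a)"
    proof (rule oneD[OF ks, of "\<lambda>a b. dd ?C a b c d"])
      show "dd ?C a' c' c d = dd ?C a' b' c d + dd ?C b' c' c d" for a' b' c'
        by (rule dd_addx)
      show "infnorm (dd ?C a' b' c d) \<le> 3 * L * (d - c) * (b' - a')"
        if "s i \<le> a'" "a' < b'" "b' \<le> s (i + 1)" for i a' b'
      proof -
        have e: "3 * L * (d - c) * (b' - a') = 3 * L * (b' - a') * (d - c)" by (simp add: algebra_simps)
        show ?thesis by (subst e) (rule cell_bound[OF ks kt net that \<open>t j \<le> c\<close> \<open>c < d\<close> \<open>d \<le> t (j+1)\<close>])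
      qed
      show "a < b" by fact
    qed
    then show ?thesis by simp
  qed
  have step2: "infnorm (dd ?C a b c d) \<le> 3 * L * (b - a) * (d - c)"
    if "a < b" "c < d" for a b c d
  proof -
    have "infnorm (dd ?C a b c d) \<le> (3 * L * (b - a)) * (d - c)"
    proof (rule oneD[OF kt, of "\<lambda>c d. dd ?C a b c d"])
      show "dd ?C a b a' c' = dd ?C a b a' b' + dd ?C a b b' c'" for a' b' c'
        by (rule dd_addy)
      show "infnorm (dd ?C a b a' b') \<le> 3 * L * (b - a) * (b' - a')"
        if "t j \<le> a'" "a' < b'" "b' \<le> t (j + 1)" for j a' b'
      proof -
        have e: "3 * L * (b - a) * (b' - a') = 3 * L * (b' - a') * (b - a)" by (simp add: algebra_simps)
        show ?thesis by (subst e) (rule step1[OF that \<open>a < b\<close>])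
      qed
      show "c < d" by fact
    qed
    then show ?thesis by simp
  qed
  have step3: "infnorm (dd ?C a b c d) \<le> 3 * L * \<bar>a - b\<bar> * \<bar>c - d\<bar>"
    if "a \<noteq> b" "c \<noteq> d" for a b c d
  proof (cases "a < b")
    case True
    show ?thesis
    proof (cases "c < d")
      case True
      then show ?thesis using step2[OF \<open>a < b\<close> True] \<open>a < b\<close> by simp
    next
      case False
      then have "d < c" using that by simp
      then show ?thesis using step2[OF \<open>a < b\<close> \<open>d < c\<close>] \<open>a < b\<close> dd_swapy[of ?C a b d c]
        by (simp add: infnorm_neg)
    qed
  next
    case F: False
    then have ba: "b < a" using that by simp
    show ?thesis
    proof (cases "c < d")
      case True
      then show ?thesis using step2[OF ba True] ba dd_swapx[of ?C b a c d]
        by (simp add: infnorm_neg)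
    next
      case False
      then have "d < c" using that by simp
      then show ?thesis using step2[OF ba \<open>d < c\<close>] ba dd_swapx[of ?C b a d c] dd_swapy[of ?C a b d c]
        by (simp add: infnorm_neg)
    qed
  qed
  show ?thesis unfolding BMSDD_R2_def
  proof (intro allI impI)
    fix a b c d :: real
    assume ne: "a \<noteq> b \<and> c \<noteq> d"
    have pos: "\<bar>a - b\<bar> * \<bar>c - d\<bar> > 0" using ne by simp
    have "mdd ?C a b c d = (1 / ((a-b)*(c-d))) *\<^sub>R dd ?C a b c d"
      unfolding mdd_def dd_def by simp
    then have "infnorm (mdd ?C a b c d) = infnorm (dd ?C a b c d) / (\<bar>a - b\<bar> * \<bar>c - d\<bar>)"
      by (simp add: infnorm_mul abs_mult)
    also have "\<dots> \<le> 3 * L"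
      using step3[of a b c d] ne pos by (simp add: divide_le_eq ac_simps)
    finally show "infnorm (mdd ?C a b c d) \<le> 3 * L" .
  qed
qed

end
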